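(* Let $G=(V,E)$ be a finite simple undirected graph, let $A\subseteq V$ be a set of attacked devices, and let $k$ be a nonnegative integer, so that $(G,A,k)$ is an instance of SNP-V. Let $D\subseteq V\setminus A$ be the set of non-attacked devices of degree one in $G$ (i.e. devices not in $A$ with exactly one incident edge in $G$). Then there exists a solution $C$ of the SNP-V instance $(G,A,k)$, i.e. a set $C\subseteq V$ with $|C|\le k$ minimizing $\Phi(G-C)$ among all subsets of $V$ of size at most $k$, such that $C\cap D=\emptyset$.
   Context: Vertices of $G$ are called devices and edges connections. For $C\subseteq V$, $G-C$ denotes the graph obtained from $G$ by deleting every device in $C$ together with its incident connections. Two distinct devices $u,v$ of a graph $H$ are connected if there is a path from $u$ to $v$ in $H$. For a graph $H$ whose device set is a subset of $V$: an (unordered) pair $\{u,v\}$ of distinct devices of $H$ forms a vulnerable connection if $u$ and $v$ are connected in $H$ and $u\in A$ or $v\in A$; the $A$-vulnerability $\mathrm{vul}(H)$ is the number of such pairs. A pair $\{u,v\}$ of distinct devices of $H$ forms a healthy connection if $u$ and $v$ are connected in $H$ and $u\notin A$ and $v\notin A$; the $A$-healthiness $\mathrm{heal}(H)$ is the number of such pairs. The objective value of $H$ is $\Phi(H)=(|V|^2+1)\cdot\mathrm{vul}(H)-\mathrm{heal}(H)$, where $|V|$ is the number of devices of the original graph $G$. The Security Node Problem with Vulnerable Vertices (SNP-V) on input $(G,A,k)$ asks for a set $C\subseteq V$ with $|C|\le k$ such that $\Phi(G-C)$ is minimal; such a $C$ is called a solution. *)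

theory Defs
  imports Main
begin

definition simple_graph :: "'a set \<Rightarrow> 'a set set \<Rightarrow> bool" where
  "simple_graph V E \<longleftrightarrow> finite V \<and> (\<forall>e\<in>E. e \<subseteq> V \<and> card e = 2)"

definition del_verts :: "'a set \<Rightarrow> 'a set set \<Rightarrow> 'a set \<Rightarrow> 'a set \<times> 'a set set" where
  "del_verts V E C = (V - C, {e \<in> E. e \<inter> C = {}})"

definition adj :: "'a set \<Rightarrow> 'a set set \<Rightarrow> ('a \<times> 'a) set" where
  "adj W F = {(u, v). u \<in> W \<and> v \<in> W \<and> {u, v} \<in> F}"

definition connected_in :: "'a set \<Rightarrow> 'a set set \<Rightarrow> 'a \<Rightarrow> 'a \<Rightarrow> bool" where
  "connected_in W F u v \<longleftrightarrow> (u, v) \<in> (adj W F)\<^sup>+"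

definition conn_pairs :: "'a set \<Rightarrow> 'a set set \<Rightarrow> 'a set set" where
  "conn_pairs W F = {{u, v} | u v. u \<in> W \<and> v \<in> W \<and> u \<noteq> v \<and> connected_in W F u v}"

definition vul :: "'a set \<Rightarrow> 'a set \<Rightarrow> 'a set set \<Rightarrow> nat" where
  "vul A W F = card {p \<in> conn_pairs W F. p \<inter> A \<noteq> {}}"

definition heal :: "'a set \<Rightarrow> 'a set \<Rightarrow> 'a set set \<Rightarrow> nat" where
  "heal A W F = card {p \<in> conn_pairs W F. p \<inter> A = {}}"

(* objective value; n = |V| of the original graph *)
definition Phi :: "nat \<Rightarrow> 'a set \<Rightarrow> 'a set \<Rightarrow> 'a set set \<Rightarrow> int" where
  "Phi n A W F = (int n ^ 2 + 1) * int (vul A W F) - int (heal A W F)"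

definition snpv_solution :: "'a set \<Rightarrow> 'a set set \<Rightarrow> 'a set \<Rightarrow> nat \<Rightarrow> 'a set \<Rightarrow> bool" where
  "snpv_solution V E A k C \<longleftrightarrow>
     C \<subseteq> V \<and> card C \<le> k \<and>
     (\<forall>C'. C' \<subseteq> V \<and> card C' \<le> k \<longrightarrow>
        Phi (card V) A (fst (del_verts V E C)) (snd (del_verts V E C))
        \<le> Phi (card V) A (fst (del_verts V E C')) (snd (del_verts V E C')))"

definition degree :: "'a set set \<Rightarrow> 'a \<Rightarrow> nat" where
  "degree E v = card {e \<in> E. v \<in> e}"

end

theory Submission
  imports Defs
begin

definition RR :: "'a set \<Rightarrow> 'a set set \<Rightarrow> 'a set \<Rightarrow> ('a \<times> 'a) set" where
  "RR V E C = {(x,y). x \<in> V - C \<and> y \<in> V - C \<and> {x,y} \<in> E}"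

definition PP :: "'a set \<Rightarrow> 'a set set \<Rightarrow> 'a set \<Rightarrow> 'a set set" where
  "PP V E C = {{x,y} |x y. x \<in> V - C \<and> y \<in> V - C \<and> x \<noteq> y \<and> (x,y) \<in> (RR V E C)\<^sup>+}"

definition vl :: "'a set \<Rightarrow> 'a set set \<Rightarrow> 'a set \<Rightarrow> 'a set \<Rightarrow> nat" where
  "vl V E A C = card {p \<in> PP V E C. p \<inter> A \<noteq> {}}"

definition hl :: "'a set \<Rightarrow> 'a set set \<Rightarrow> 'a set \<Rightarrow> 'a set \<Rightarrow> nat" where
  "hl V E A C = card {p \<in> PP V E C. p \<inter> A = {}}"

definition ph :: "'a set \<Rightarrow> 'a set set \<Rightarrow> 'a set \<Rightarrow> 'a set \<Rightarrow> int" where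
  "ph V E A C = (int (card V) ^ 2 + 1) * int (vl V E A C) - int (hl V E A C)"

lemma adj_eq:
  assumes "simple_graph V E"
  shows "adj (V - C) {e\<in>E. e \<inter> C = {}} = RR V E C"
  using assms unfolding adj_def RR_def simple_graph_def by auto

lemma Phi_eq:
  assumes "simple_graph V E"
  shows "Phi (card V) A (fst (del_verts V E C)) (snd (del_verts V E C)) = ph V E A C"
  unfolding Phi_def vul_def heal_def vl_def hl_def del_verts_def PP_def conn_pairs_def
    connected_in_def ph_def using adj_eq[OF assms, of C] by simp

lemma sol_iff:
  assumes "simple_graph V E"
  shows "snpv_solution V E A k C \<longleftrightarrow> C \<subseteq> V \<and> card C \<le> k \<and>
     (\<forall>C'. C' \<subseteq> V \<and> card C' \<le> k \<longrightarrow> ph V E A C \<le> ph V E A C')"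
  unfolding snpv_solution_def Phi_eq[OF assms] ..

lemma PP_sub: "PP V E C \<subseteq> (\<lambda>(x,y). {x,y}) ` (V \<times> V)"
proof
  fix p assume "p \<in> PP V E C"
  then obtain x y where xy: "p = {x,y}" "x \<in> V" "y \<in> V" unfolding PP_def by auto
  show "p \<in> (\<lambda>(x,y). {x,y}) ` (V \<times> V)"
    by (rule image_eqI[of _ _ "(x,y)"]) (use xy in auto)
qed

lemma PP_fin: assumes "finite V" shows "finite (PP V E C)"
  by (rule finite_subset[OF PP_sub]) (intro finite_imageI finite_cartesian_product assms)

lemma PP_card: assumes "finite V" shows "card (PP V E C) \<le> card V ^ 2"
proof -
  have "card (PP V E C) \<le> card ((\<lambda>(x,y). {x,y}) ` (V \<times> V))"
    by (rule card_mono[OF _ PP_sub]) (intro finite_imageI finite_cartesian_product assms)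
  also have "\<dots> \<le> card (V \<times> V)" by (rule card_image_le) (use assms in blast)
  also have "\<dots> = card V ^ 2" by (simp add: card_cartesian_product power2_eq_square)
  finally show ?thesis .
qed

lemma hl_le: assumes "finite V" shows "hl V E A C \<le> card V ^ 2"
proof -
  have "hl V E A C \<le> card (PP V E C)" unfolding hl_def
    by (rule card_mono[OF PP_fin[OF assms]]) blast
  then show ?thesis using PP_card[OF assms, of E C] by linarith
qed

lemma RR_trancl_in: "(x,y) \<in> (RR V E C)\<^sup>+ \<Longrightarrow> x \<in> V - C \<and> y \<in> V - C"
  by (induct rule: trancl_induct) (auto simp: RR_def)

lemma RR_sym: "(x,y) \<in> (RR V E C)\<^sup>+ \<Longrightarrow> (y,x) \<in> (RR V E C)\<^sup>+"
proof -
  have "(RR V E C)\<inverse> = RR V E C" unfolding RR_def by (auto simp: insert_commute)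
  moreover assume "(x,y) \<in> (RR V E C)\<^sup>+"
  ultimately show ?thesis by (metis converseD trancl_converse)
qed

lemma RR_mono: "C' \<subseteq> C \<Longrightarrow> RR V E C \<subseteq> RR V E C'"
  unfolding RR_def by auto


context
  fixes V :: "'a set" and E :: "'a set set" and C :: "'a set" and u v :: 'a
  assumes vC: "v \<in> C" and uv: "{v,u} \<in> E"
    and uniq: "\<And>w. {v,w} \<in> E \<Longrightarrow> w = u" and u_ne: "u \<noteq> v"
begin

lemma uniq': "{w,v} \<in> E \<Longrightarrow> w = u"
  using uniq by (simp add: insert_commute)

lemma L1:
  assumes "(x,y) \<in> (RR V E (C - {v}))\<^sup>+" "x \<noteq> v"
  shows "(x, if y = v then u else y) \<in> (RR V E C)\<^sup>*"
  using assms(1)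
proof (induct rule: trancl_induct)
  case (base y)
  show ?case
  proof (cases "y = v")
    case True
    then have "x = u" using base uniq' by (auto simp: RR_def)
    then show ?thesis using True by simp
  next
    case False
    then have "(x,y) \<in> RR V E C" using base assms(2) by (auto simp: RR_def)
    then show ?thesis using False by simp
  qed
next
  case (step y z)
  show ?case
  proof (cases "z = v")
    case True
    then have "y = u" using step uniq' by (auto simp: RR_def)
    then show ?thesis using True step u_ne by simp
  next
    case False
    show ?thesis
    proof (cases "y = v")
      case True
      then have "z = u" using step uniq by (auto simp: RR_def)
      then show ?thesis using True step False by simp
    next
      case yv: False
      then have "(y,z) \<in> RR V E C" using step False by (auto simp: RR_def)
      then show ?thesis using step yv False by (simp add: rtrancl_into_rtrancl)
    qed
  qed
qed

lemma L2:
  assumes "(x,y) \<in> (RR V E C)\<^sup>+" "x \<noteq> u"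
  shows "(x,y) \<in> (RR V E (insert u (C - {v})))\<^sup>+ \<or> (x,u) \<in> (RR V E C)\<^sup>+"
  using assms(1)
proof (induct rule: trancl_induct)
  case (base y)
  show ?case
  proof (cases "y = u")
    case True then show ?thesis using base by auto
  next
    case False
    then have "(x,y) \<in> RR V E (insert u (C - {v}))" using base assms(2) by (auto simp: RR_def)
    then show ?thesis by auto
  qed
next
  case (step y z)
  show ?case
  proof (cases "(x,u) \<in> (RR V E C)\<^sup>+")
    case True then show ?thesis by auto
  next
    case False
    then have xy: "(x,y) \<in> (RR V E (insert u (C - {v})))\<^sup>+" using step by auto
    show ?thesis
    proof (cases "z = u")
      case True then show ?thesis using step by (meson trancl_into_trancl)
    next
      case zu: False
      have "y \<noteq> u" using RR_trancl_in[OF xy] by auto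
      then have "(y,z) \<in> RR V E (insert u (C - {v}))" using step zu by (auto simp: RR_def)
      then show ?thesis using xy by (meson trancl_into_trancl)
    qed
  qed
qed

lemma L3: "RR V E (insert u (C - {v})) \<subseteq> RR V E C"
proof
  fix p assume p: "p \<in> RR V E (insert u (C - {v}))"
  obtain a b where ab: "p = (a,b)" by force
  have "a \<noteq> v" using p uniq unfolding ab RR_def by auto
  moreover have "b \<noteq> v" using p uniq' unfolding ab RR_def by auto
  ultimately show "p \<in> RR V E C" using p unfolding ab RR_def by auto
qed

lemma PP2_sub: "PP V E (insert u (C - {v})) \<subseteq> PP V E C"
proof
  fix p assume "p \<in> PP V E (insert u (C - {v}))"
  then obtain x y where p: "p = {x,y}" "x \<noteq> y" "(x,y) \<in> (RR V E (insert u (C - {v})))\<^sup>+"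
    unfolding PP_def by auto
  then have xy: "(x,y) \<in> (RR V E C)\<^sup>+" using L3 trancl_mono by blast
  note m = RR_trancl_in[OF xy]
  show "p \<in> PP V E C" unfolding PP_def mem_Collect_eq
    by (rule exI[of _ x], rule exI[of _ y]) (use p m xy in blast)
qed

lemma PP1_sup: "PP V E C \<subseteq> PP V E (C - {v})"
proof
  fix p assume "p \<in> PP V E C"
  then obtain x y where p: "p = {x,y}" "x \<noteq> y" "(x,y) \<in> (RR V E C)\<^sup>+"
    unfolding PP_def by auto
  then have xy: "(x,y) \<in> (RR V E (C - {v}))\<^sup>+" using RR_mono[of "C - {v}" C V E] trancl_mono by blast
  note m = RR_trancl_in[OF xy]
  show "p \<in> PP V E (C - {v})" unfolding PP_def mem_Collect_eq
    by (rule exI[of _ x], rule exI[of _ y]) (use p m xy in blast)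
qed

end


lemma PP_intro:
  assumes h: "(x,y) \<in> (RR V E C)\<^sup>+" and "x \<noteq> y"
  shows "{x,y} \<in> PP V E C"
proof -
  note m = RR_trancl_in[OF h]
  show ?thesis unfolding PP_def mem_Collect_eq
    by (rule exI[of _ x], rule exI[of _ y]) (use assms m in blast)
qed

lemma PP_subset: "p \<in> PP V E C \<Longrightarrow> p \<subseteq> V - C"
  unfolding PP_def by auto

lemma improve:
  assumes sg: "simple_graph V E" and sol: "snpv_solution V E A k C"
    and vC: "v \<in> C" and vA: "v \<notin> A" and dv: "degree E v = 1"
  shows "\<exists>C'. snpv_solution V E A k C' \<and>
    C' \<inter> {w \<in> V - A. degree E w = 1} \<subseteq> C \<inter> {w \<in> V - A. degree E w = 1} - {v}"
proof -
  have finV: "finite V" and Esub: "\<And>e. e \<in> E \<Longrightarrow> e \<subseteq> V \<and> card e = 2"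
    using sg unfolding simple_graph_def by auto
  have finE: "finite E" using Esub finV
    by (meson Pow_iff finite_Pow_iff finite_subset subsetI)
  obtain e0 where e0: "{e\<in>E. v \<in> e} = {e0}"
    using dv card_1_singletonE unfolding degree_def by blast
  have e0E: "e0 \<in> E" and ve0: "v \<in> e0" using e0 by blast+
  obtain a b where ab: "e0 = {a,b}" "a \<noteq> b" using Esub[OF e0E] card_2_iff by metis
  have "\<exists>u. e0 = {v,u} \<and> u \<noteq> v"
  proof (cases "v = a")
    case True then show ?thesis using ab by blast
  next
    case False then have "v = b" using ve0 ab by auto
    then show ?thesis using ab by (metis insert_commute)
  qed
  then obtain u where e0u: "e0 = {v,u}" and u_ne: "u \<noteq> v" by blast
  have uv: "{v,u} \<in> E" using e0E e0u by simp
  have uniq: "w = u" if "{v,w} \<in> E" for w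
  proof -
    have "{v,w} \<in> {e\<in>E. v \<in> e}" using that by simp
    then have "{v,w} = {v,u}" using e0 e0u by simp
    then show ?thesis using u_ne by (auto simp: doubleton_eq_iff)
  qed
  note ctx = vC uv uniq u_ne
  have uV: "u \<in> V" using Esub[OF uv] by auto
  have CV: "C \<subseteq> V" and ck: "card C \<le> k"
    and opt: "\<And>C'. C' \<subseteq> V \<Longrightarrow> card C' \<le> k \<Longrightarrow> ph V E A C \<le> ph V E A C'"
    using sol unfolding sol_iff[OF sg] by auto
  have finC: "finite C" using CV finV finite_subset by blast
  have sol_of: "snpv_solution V E A k C'"
    if "C' \<subseteq> V" "card C' \<le> card C" "ph V E A C' \<le> ph V E A C" for C'
  proof -
    have "card C' \<le> k" using ck that by linarith
    moreover have "\<forall>C''. C'' \<subseteq> V \<and> card C'' \<le> k \<longrightarrow> ph V E A C' \<le> ph V E A C''"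
      using opt that(3) by (meson order_trans)
    ultimately show ?thesis using sol_iff[OF sg] that(1) by blast
  qed
  define C1 where "C1 = C - {v}"
  define C2 where "C2 = insert u (C - {v})"
  have cC1: "card C1 \<le> card C" unfolding C1_def by (rule card_Diff1_le)
  have "card C1 = card C - 1" unfolding C1_def using vC finC by simp
  moreover have "card C \<ge> 1" using vC finC by (metis One_nat_def Suc_leI card_gt_0_iff empty_iff)
  moreover have "card C2 \<le> Suc (card C1)" unfolding C2_def C1_def
    using finC by (simp add: card_insert_le_m1 card_insert_if)
  ultimately have cC2: "card C2 \<le> card C" by linarith
  have C1V: "C1 \<subseteq> V" and C2V: "C2 \<subseteq> V" using CV uV unfolding C1_def C2_def by auto
  define N where "N = int (card V) ^ 2 + 1"
  have "int (hl V E A C) \<le> int (card V ^ 2)" using hl_le[OF finV, of E A C] by (simp only: of_nat_le_iff)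
  then have hlC: "int (hl V E A C) < N" unfolding N_def by simp
  have finP: "\<And>X. finite (PP V E X)" using PP_fin[OF finV] by blast
  show ?thesis
  proof (cases "u \<notin> C \<and> (\<exists>a\<in>A. u = a \<or> (u,a) \<in> (RR V E C)\<^sup>+)")
    case True
    then obtain a where aA: "a \<in> A" and ua: "u = a \<or> (u,a) \<in> (RR V E C)\<^sup>+" and uC: "u \<notin> C"
      by blast
    have uD: "\<not> (u \<notin> A \<and> degree E u = 1)"
    proof
      assume uD: "u \<notin> A \<and> degree E u = 1"
      then have "(u,a) \<in> (RR V E C)\<^sup>+" using ua aA by auto
      then obtain w where uw: "(u,w) \<in> RR V E C" using tranclD by metis
      then have uwE: "{u,w} \<in> E" and wv: "w \<noteq> v" using vC unfolding RR_def by auto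
      have ne: "{u,v} \<noteq> {u,w}" using wv u_ne by (auto simp: doubleton_eq_iff)
      have "{{u,v},{u,w}} \<subseteq> {e\<in>E. u \<in> e}" using uv uwE by (auto simp: insert_commute)
      moreover have "finite {e\<in>E. u \<in> e}" using finE by simp
      ultimately have "card {{u,v},{u,w}} \<le> degree E u" unfolding degree_def by (rule card_mono[rotated])
      then show False using ne uD by simp
    qed
    have P2sub: "PP V E C2 \<subseteq> PP V E C" unfolding C2_def by (rule PP2_sub[OF ctx])
    have "ph V E A C2 \<le> ph V E A C"
    proof (cases "vl V E A C2 < vl V E A C")
      case True
      then have "N * int (vl V E A C2) + N * 1 \<le> N * int (vl V E A C)"
        unfolding distrib_left[symmetric] by (intro mult_left_mono) (auto simp: N_def)
      then show ?thesis using hlC unfolding ph_def N_def[symmetric] by linarith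
    next
      case False
      have vsub: "{p \<in> PP V E C2. p \<inter> A \<noteq> {}} \<subseteq> {p \<in> PP V E C. p \<inter> A \<noteq> {}}" using P2sub by blast
      have vfin: "finite {p \<in> PP V E C. p \<inter> A \<noteq> {}}" using finP by simp
      have "vl V E A C2 \<le> vl V E A C" unfolding vl_def by (rule card_mono[OF vfin vsub])
      then have "vl V E A C2 = vl V E A C" using False by simp
      then have veq: "{p \<in> PP V E C2. p \<inter> A \<noteq> {}} = {p \<in> PP V E C. p \<inter> A \<noteq> {}}"
        unfolding vl_def by (rule card_subset_eq[OF vfin vsub])
      have lost: "q \<notin> PP V E C2" if "u \<in> q" for q using PP_subset[of q V E C2] that unfolding C2_def by auto
      have heq: "{p \<in> PP V E C2. p \<inter> A = {}} = {p \<in> PP V E C. p \<inter> A = {}}"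
      proof
        show "{p \<in> PP V E C2. p \<inter> A = {}} \<subseteq> {p \<in> PP V E C. p \<inter> A = {}}" using P2sub by blast
      next
        show "{p \<in> PP V E C. p \<inter> A = {}} \<subseteq> {p \<in> PP V E C2. p \<inter> A = {}}"
        proof
          fix p assume p: "p \<in> {p \<in> PP V E C. p \<inter> A = {}}"
          show "p \<in> {p \<in> PP V E C2. p \<inter> A = {}}"
          proof (rule ccontr)
            assume np: "p \<notin> {p \<in> PP V E C2. p \<inter> A = {}}"
            obtain x y where xy: "p = {x,y}" "x \<noteq> y" "(x,y) \<in> (RR V E C)\<^sup>+"
              using p unfolding PP_def by auto
            have "\<exists>q. q \<in> PP V E C \<and> q \<inter> A \<noteq> {} \<and> u \<in> q"
            proof (cases "u \<in> A")
              case False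
              then have "(u,a) \<in> (RR V E C)\<^sup>+" "u \<noteq> a" using ua aA by auto
              then have "{u,a} \<in> PP V E C" by (intro PP_intro)
              then show ?thesis using aA by blast
            next
              case True
              have "x \<notin> A" using p xy by auto
              then have "x \<noteq> u" using True by auto
              from L2[OF ctx xy(3) this]
              have "(x,u) \<in> (RR V E C)\<^sup>+"
              proof
                assume h: "(x,y) \<in> (RR V E (insert u (C - {v})))\<^sup>+"
                then have "p \<in> PP V E C2" using xy PP_intro[OF h xy(2)] unfolding C2_def by simp
                then show ?thesis using np p by blast
              qed
              then have "{x,u} \<in> PP V E C" using \<open>x \<noteq> u\<close> by (intro PP_intro)
              then show ?thesis using True by blast
            qed
            then show False using veq lost by blast
          qed
        qed
      qed
      have "vl V E A C2 = vl V E A C" "hl V E A C2 = hl V E A C"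
        unfolding vl_def hl_def using veq heq by simp_all
      then show ?thesis unfolding ph_def by simp
    qed
    then have "snpv_solution V E A k C2" using sol_of C2V cC2 by blast
    moreover have "C2 \<inter> {w \<in> V - A. degree E w = 1} \<subseteq> C \<inter> {w \<in> V - A. degree E w = 1} - {v}"
      using uD u_ne unfolding C2_def by auto
    ultimately show ?thesis by blast
  next
    case False
    have H: False if h: "(v,y) \<in> (RR V E C1)\<^sup>+" and yA: "y \<in> A" for y
    proof -
      obtain w where vw: "(v,w) \<in> RR V E C1" and wy: "(w,y) \<in> (RR V E C1)\<^sup>*"
        using tranclD[OF h] by blast
      have "w = u" using vw uniq unfolding RR_def by auto
      then have uC: "u \<notin> C" using vw u_ne unfolding RR_def C1_def by auto
      show False
      proof (cases "u = y")
        case True then show False using False uC yA by blast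
      next
        case uy: False
        then have "(u,y) \<in> (RR V E C1)\<^sup>+" using wy \<open>w = u\<close> by (simp add: rtrancl_eq_or_trancl)
        from L1[OF ctx this[unfolded C1_def] u_ne]
        have "(u,y) \<in> (RR V E C)\<^sup>*" using yA vA by (auto split: if_splits)
        then have "(u,y) \<in> (RR V E C)\<^sup>+" using uy by (simp add: rtrancl_eq_or_trancl)
        then show False using False uC yA by blast
      qed
    qed
    have P1sup: "PP V E C \<subseteq> PP V E C1" unfolding C1_def by (rule PP1_sup[OF ctx])
    have veq: "{p \<in> PP V E C1. p \<inter> A \<noteq> {}} = {p \<in> PP V E C. p \<inter> A \<noteq> {}}"
    proof
      show "{p \<in> PP V E C. p \<inter> A \<noteq> {}} \<subseteq> {p \<in> PP V E C1. p \<inter> A \<noteq> {}}" using P1sup by blast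
    next
      show "{p \<in> PP V E C1. p \<inter> A \<noteq> {}} \<subseteq> {p \<in> PP V E C. p \<inter> A \<noteq> {}}"
      proof
        fix p assume p: "p \<in> {p \<in> PP V E C1. p \<inter> A \<noteq> {}}"
        obtain x y where xy: "p = {x,y}" "x \<noteq> y" "(x,y) \<in> (RR V E C1)\<^sup>+"
          using p unfolding PP_def by auto
        have "x \<noteq> v"
        proof
          assume "x = v" then have "y \<in> A" using p xy vA by auto
          then show False using H xy \<open>x = v\<close> by blast
        qed
        moreover have "y \<noteq> v"
        proof
          assume "y = v" then have "x \<in> A" using p xy vA by auto
          then show False using H RR_sym[OF xy(3)] \<open>y = v\<close> by blast
        qed
        ultimately have "(x,y) \<in> (RR V E C)\<^sup>*" using L1[OF ctx xy(3)[unfolded C1_def]] by simp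
        then have h: "(x,y) \<in> (RR V E C)\<^sup>+" using xy(2) by (simp add: rtrancl_eq_or_trancl)
        then have "p \<in> PP V E C" using xy PP_intro[OF h xy(2)] by simp
        then show "p \<in> {p \<in> PP V E C. p \<inter> A \<noteq> {}}" using p by blast
      qed
    qed
    have "hl V E A C \<le> hl V E A C1" unfolding hl_def
      by (rule card_mono) (use P1sup finP in auto)
    moreover have "vl V E A C1 = vl V E A C" unfolding vl_def using veq by simp
    ultimately have "ph V E A C1 \<le> ph V E A C" unfolding ph_def by simp
    then have "snpv_solution V E A k C1" using sol_of C1V cC1 by blast
    moreover have "C1 \<inter> {w \<in> V - A. degree E w = 1} \<subseteq> C \<inter> {w \<in> V - A. degree E w = 1} - {v}"
      unfolding C1_def by auto
    ultimately show ?thesis by blast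
  qed
qed

theorem proposition1:
  fixes V :: "'a set" and E :: "'a set set" and A :: "'a set" and k :: nat
  assumes "simple_graph V E" and "A \<subseteq> V"
  defines "D \<equiv> {v \<in> V - A. degree E v = 1}"
  shows "\<exists>C. snpv_solution V E A k C \<and> C \<inter> D = {}"
proof -
  have finV: "finite V" using assms(1) unfolding simple_graph_def by auto
  define S where "S = {C. C \<subseteq> V \<and> card C \<le> k}"
  have finS: "finite S" unfolding S_def using finV by (simp add: finite_subset[of _ "Pow V"] subset_iff)
  have "{} \<in> S" unfolding S_def by simp
  then have ne: "ph V E A ` S \<noteq> {}" by blast
  obtain C0 where C0: "C0 \<in> S" "ph V E A C0 = Min (ph V E A ` S)"
    using Min_in[OF finite_imageI[OF finS] ne] by auto
  have "snpv_solution V E A k C0"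
    unfolding sol_iff[OF assms(1)] using C0 finS unfolding S_def by auto
  then obtain C where solC: "snpv_solution V E A k C"
    and least: "\<forall>C'. snpv_solution V E A k C' \<longrightarrow> card (C \<inter> D) \<le> card (C' \<inter> D)"
    using ex_has_least_nat[of "snpv_solution V E A k" C0 "\<lambda>C. card (C \<inter> D)"] by blast
  show ?thesis
  proof (cases "C \<inter> D = {}")
    case True then show ?thesis using solC by blast
  next
    case False
    then obtain v where v: "v \<in> C" "v \<in> D" by blast
    then have "v \<notin> A" "degree E v = 1" unfolding D_def by auto
    from improve[OF assms(1) solC v(1) this] obtain C' where
      C': "snpv_solution V E A k C'" "C' \<inter> D \<subseteq> C \<inter> D - {v}" unfolding D_def by blast
    have "finite (C \<inter> D)" using finV unfolding D_def by simp
    moreover have "C' \<inter> D \<subset> C \<inter> D" using C'(2) v by blast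
    ultimately have "card (C' \<inter> D) < card (C \<inter> D)" by (rule psubset_card_mono)
    moreover have "card (C \<inter> D) \<le> card (C' \<inter> D)" using least C'(1) by blast
    ultimately show ?thesis by linarith
  qed
qed

end
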